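(* Let $S$ be the standard form on $\mathbb{R}^{2m}$. A closed set $G\subset\mathbb{R}^{2m}$ is a linear subspace of $\mathbb{R}^{2m}$ belonging to $\mathcal{M}(S)$ and strictly $S$-monotone if and only if $G=\operatorname{graph}f$, where $f(u)=Au$, $u\in\mathbb{R}^m$, for some positive-definite $m\times m$ matrix $A$.
   Context: Standard form on $\mathbb{R}^{2m}$: $S((r,s),(u,v)):=\langle s,u\rangle+\langle r,v\rangle$, $r,s,u,v\in\mathbb{R}^m$. $G$ is $S$-monotone if $S(x-y,x-y)\ge0$ for $x,y\in G$; strictly $S$-monotone if $S(x-y,x-y)>0$ for all $x\ne y$ in $G$; maximal $S$-monotone if not a strict subset of another $S$-monotone set; $\mathcal{M}(S)$ = family of maximal $S$-monotone sets. An $m\times m$ real matrix $A$ (possibly non-symmetric) is positive-definite if $\langle r,Ar\rangle>0$ for all $r\ne0$. *)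

theory Defs
  imports "HOL-Analysis.Analysis"
begin

definition Sform :: "((real^'m) \<times> (real^'m)) \<Rightarrow> ((real^'m) \<times> (real^'m)) \<Rightarrow> real" where
  "Sform x y = (snd x \<bullet> fst y) + (fst x \<bullet> snd y)"

definition S_monotone :: "((real^'m) \<times> (real^'m)) set \<Rightarrow> bool" where
  "S_monotone G \<longleftrightarrow> (\<forall>x\<in>G. \<forall>y\<in>G. Sform (x - y) (x - y) \<ge> 0)"

definition strictly_S_monotone :: "((real^'m) \<times> (real^'m)) set \<Rightarrow> bool" where
  "strictly_S_monotone G \<longleftrightarrow> (\<forall>x\<in>G. \<forall>y\<in>G. x \<noteq> y \<longrightarrow> Sform (x - y) (x - y) > 0)"

definition maximal_S_monotone_sets :: "((real^'m) \<times> (real^'m)) set set" where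
  "maximal_S_monotone_sets = {G. S_monotone G \<and> \<not> (\<exists>H. S_monotone H \<and> G \<subset> H)}"

definition positive_definite :: "real^'m^'m \<Rightarrow> bool" where
  "positive_definite A \<longleftrightarrow> (\<forall>r. r \<noteq> 0 \<longrightarrow> r \<bullet> (A *v r) > 0)"

definition graph :: "(real^'m \<Rightarrow> real^'m) \<Rightarrow> ((real^'m) \<times> (real^'m)) set" where
  "graph f = {(u, f u) | u. True}"

end

theory Submission
  imports Defs
begin

lemma Sform_self: "Sform x x = 2 * (fst x \<bullet> snd x)"
  by (simp add: Sform_def inner_commute)

lemma Sform_pair: "Sform ((a,b) - (c,d)) ((a,b) - (c,d)) = 2 * ((a - c) \<bullet> (b - d))"
  by (simp add: Sform_self)

lemma dir1:
  fixes G :: "((real^'m) \<times> (real^'m)) set"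
  assumes sub: "subspace G" and mx: "G \<in> maximal_S_monotone_sets" and st: "strictly_S_monotone G"
  shows "\<exists>A :: real^'m^'m. positive_definite A \<and> G = graph (\<lambda>u. A *v u)"
proof -
  have uniq: "s1 = s2" if "(u,s1) \<in> G" "(u,s2) \<in> G" for u s1 s2
  proof (rule ccontr)
    assume "s1 \<noteq> s2"
    then have ne: "(u,s1) \<noteq> (u,s2)" by simp
    have "Sform ((u,s1) - (u,s2)) ((u,s1) - (u,s2)) > 0"
      using st[unfolded strictly_S_monotone_def, rule_format, OF that ne] .
    then show False by (simp add: Sform_self)
  qed
  have mono0: "0 \<le> (u1 - u2) \<bullet> (s1 - s2)" if "(u1,s1) \<in> G" "(u2,s2) \<in> G" for u1 s1 u2 s2
  proof (cases "(u1,s1) = (u2,s2)")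
    case True then show ?thesis by simp
  next
    case False
    have "Sform ((u1,s1) - (u2,s2)) ((u1,s1) - (u2,s2)) > 0"
      using st[unfolded strictly_S_monotone_def, rule_format, OF that False] .
    then show ?thesis by (simp add: Sform_self)
  qed
  have G0: "(0,0) \<in> G" using sub subspace_0 by (metis zero_prod_def)
  define D where "D = fst ` G"
  have subD: "subspace D"
    unfolding D_def subspace_def
  proof (intro conjI ballI allI)
    show "0 \<in> fst ` G" using G0 by force
  next
    fix x y assume "x \<in> fst ` G" "y \<in> fst ` G"
    then obtain a b where "a \<in> G" "b \<in> G" "x = fst a" "y = fst b" by auto
    then show "x + y \<in> fst ` G" using sub subspace_add
      by (metis fst_add image_eqI)
  next
    fix c :: real and x assume "x \<in> fst ` G"
    then obtain a where "a \<in> G" "x = fst a" by auto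
    then show "c *\<^sub>R x \<in> fst ` G" using sub subspace_scale
      by (metis fst_scaleR image_eqI)
  qed
  have tot: "\<exists>s. (u,s) \<in> G" for u
  proof (rule ccontr)
    assume nu: "\<not> (\<exists>s. (u,s) \<in> G)"
    have "u \<notin> D" using nu unfolding D_def by force
    moreover have "span D = D" using subD span_eq_iff by blast
    ultimately have "span D \<noteq> UNIV" by (metis UNIV_I)
    then have "span D \<subset> span UNIV" by (metis span_UNIV psubsetI subset_UNIV)
    then obtain w where w: "w \<noteq> 0" "\<And>y. y \<in> span D \<Longrightarrow> orthogonal w y"
      using orthogonal_to_subspace_exists_gen by blast
    have wD: "y \<bullet> w = 0" if "y \<in> D" for y
      using w(2)[of y] that span_base[of y D] by (simp add: orthogonal_def inner_commute)
    define H where "H = {(u, s + c *\<^sub>R w) | u s c. (u,s) \<in> G}"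
    have GH: "G \<subseteq> H" unfolding H_def by force
    have "(0::real^'m, 0 + (1::real) *\<^sub>R w) \<in> H" unfolding H_def using G0 by blast
    then have wH: "(0, w) \<in> H" by simp
    have wG: "(0, w) \<notin> G" using uniq[OF G0] w(1) by auto
    have "S_monotone H"
      unfolding S_monotone_def
    proof (intro ballI)
      fix x y assume "x \<in> H" "y \<in> H"
      then obtain u1 s1 c1 u2 s2 c2 where x: "x = (u1, s1 + c1 *\<^sub>R w)" "(u1,s1) \<in> G"
        and y: "y = (u2, s2 + c2 *\<^sub>R w)" "(u2,s2) \<in> G" unfolding H_def by blast
      have d1: "u1 \<in> D" "u2 \<in> D" using x y unfolding D_def by force+
      have "(u1 - u2) \<bullet> (s1 + c1 *\<^sub>R w - (s2 + c2 *\<^sub>R w))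
            = (u1 - u2) \<bullet> (s1 - s2) + (c1 - c2) * (u1 \<bullet> w) - (c1 - c2) * (u2 \<bullet> w)"
        by (simp add: algebra_simps inner_diff_left inner_diff_right inner_add_right)
      also have "\<dots> = (u1 - u2) \<bullet> (s1 - s2)" using wD d1 by simp
      finally show "Sform (x - y) (x - y) \<ge> 0" using mono0[OF x(2) y(2)] x(1) y(1)
        by (simp add: Sform_self)
    qed
    moreover have "G \<subset> H" using GH wH wG by blast
    ultimately show False using mx unfolding maximal_S_monotone_sets_def by blast
  qed
  define f where "f u = (SOME s. (u,s) \<in> G)" for u
  have fG: "(u, f u) \<in> G" for u unfolding f_def using tot someI_ex by metis
  have fG': "s = f u" if "(u,s) \<in> G" for u s using uniq[OF that fG] .
  have lin: "linear f"
  proof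
    fix x y
    have "(x,f x) + (y, f y) \<in> G" using sub subspace_add fG by blast
    then show "f (x + y) = f x + f y" using fG' by simp
  next
    fix c :: real and x
    have "c *\<^sub>R (x,f x) \<in> G" using sub subspace_scale fG by blast
    then show "f (c *\<^sub>R x) = c *\<^sub>R f x" using fG' by simp
  qed
  have Af: "matrix f *v u = f u" for u using matrix_vector_mul(2)[OF lin] by metis
  have pd: "positive_definite (matrix f)"
    unfolding positive_definite_def
  proof (intro allI impI)
    fix r :: "real^'m" assume "r \<noteq> 0"
    then have ne: "(r, f r) \<noteq> (0,0)" by simp
    have "Sform ((r, f r) - (0,0)) ((r, f r) - (0,0)) > 0"
      using st[unfolded strictly_S_monotone_def, rule_format, OF fG G0 ne] .
    then show "r \<bullet> (matrix f *v r) > 0" using Af by (simp add: Sform_self)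
  qed
  have "G = graph (\<lambda>u. matrix f *v u)"
    unfolding graph_def Af using fG fG' by auto
  then show ?thesis using pd by blast
qed

lemma dir2:
  fixes A :: "real^'m^'m"
  assumes pd: "positive_definite A" and G: "G = graph (\<lambda>u. A *v u)"
  shows "subspace G \<and> G \<in> maximal_S_monotone_sets \<and> strictly_S_monotone G"
proof -
  have memG: "x \<in> G \<longleftrightarrow> snd x = A *v fst x" for x using G unfolding graph_def by (cases x) auto
  have sub: "subspace G"
    unfolding subspace_def
    by (auto simp: memG matrix_vector_right_distrib matrix_vector_mult_scaleR)
  have st: "strictly_S_monotone G"
    unfolding strictly_S_monotone_def
  proof (intro ballI impI)
    fix x y assume "x \<in> G" "y \<in> G" "x \<noteq> y"
    then have e: "snd x = A *v fst x" "snd y = A *v fst y" using memG by auto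
    have "fst x \<noteq> fst y"
    proof
      assume "fst x = fst y"
      then have "snd x = snd y" using e by simp
      then show False using \<open>x \<noteq> y\<close> \<open>fst x = fst y\<close> by (simp add: prod_eq_iff)
    qed
    then have ne: "fst x - fst y \<noteq> 0" by simp
    have "Sform (x - y) (x - y) = 2 * ((fst x - fst y) \<bullet> (A *v (fst x - fst y)))"
      by (simp add: Sform_self e matrix_vector_mult_diff_distrib)
    then show "Sform (x - y) (x - y) > 0" using pd ne unfolding positive_definite_def by simp
  qed
  have mono: "S_monotone G" unfolding S_monotone_def
  proof (intro ballI)
    fix x y assume xy: "x \<in> G" "y \<in> G"
    show "Sform (x - y) (x - y) \<ge> 0"
    proof (cases "x = y")
      case True then show ?thesis by (simp add: Sform_self)
    next
      case False then show ?thesis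
        using st[unfolded strictly_S_monotone_def, rule_format, OF xy False] by simp
    qed
  qed
  have maxi: "\<not> (\<exists>H. S_monotone H \<and> G \<subset> H)"
  proof
    assume "\<exists>H. S_monotone H \<and> G \<subset> H"
    then obtain H r s where H: "S_monotone H" "G \<subseteq> H" "(r,s) \<in> H" "(r,s) \<notin> G" by auto
    define d where "d = s - A *v r"
    have d0: "d \<noteq> 0" using H(4) memG d_def by auto
    have dA: "d \<bullet> (A *v d) > 0" using pd d0 unfolding positive_definite_def by auto
    have dd: "d \<bullet> d > 0" using d0 by simp
    define t where "t = (d \<bullet> d) / (2 * (d \<bullet> (A *v d)))"
    have t0: "t > 0" unfolding t_def using dA dd by simp
    have tA: "t * (d \<bullet> (A *v d)) = (d \<bullet> d) / 2" unfolding t_def using dA by simp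
    define u where "u = r + t *\<^sub>R d"
    have "(u, A *v u) \<in> H" using H(2) memG by auto
    then have "0 \<le> Sform ((r,s) - (u, A *v u)) ((r,s) - (u, A *v u))"
      using H(1,3) unfolding S_monotone_def by blast
    also have "\<dots> = 2 * ((r - u) \<bullet> (s - A *v u))" by (simp add: Sform_self)
    also have "s - A *v u = d - t *\<^sub>R (A *v d)"
      unfolding u_def d_def by (simp add: matrix_vector_right_distrib matrix_vector_mult_scaleR)
    also have "r - u = - (t *\<^sub>R d)" unfolding u_def by simp
    also have "2 * (- (t *\<^sub>R d) \<bullet> (d - t *\<^sub>R (A *v d))) = - 2 * t * (d \<bullet> d - t * (d \<bullet> (A *v d)))"
      by (simp add: inner_diff_right algebra_simps)
    also have "\<dots> = - t * (d \<bullet> d)" using tA by simp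
    finally have "0 \<le> - t * (d \<bullet> d)" .
    then show False using mult_pos_pos[OF t0 dd] by linarith
  qed
  show ?thesis using sub st mono maxi unfolding maximal_S_monotone_sets_def by blast
qed

theorem lemma13:
  fixes G :: "((real^'m) \<times> (real^'m)) set"
  assumes "closed G"
  shows "(subspace G \<and> G \<in> maximal_S_monotone_sets \<and> strictly_S_monotone G) \<longleftrightarrow>
         (\<exists>A :: real^'m^'m. positive_definite A \<and> G = graph (\<lambda>u. A *v u))"
  using dir1[of G] dir2[of _ G] by blast

end
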